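(* Let $G$ be a vertex-color-avoiding connected graph on $n$ vertices whose vertices are colored with exactly $k\in\mathbb{Z}_+$ colors. Then $|E(G)|\ge n-1$ if $k\le 2$, and $|E(G)|\ge n$ if $k\ge 3$; moreover these lower bounds are sharp (attained by suitable such graphs).
   Context: Vertex-colorings are arbitrary (not necessarily proper). Two vertices $u,v$ of a vertex-colored graph are vertex-$c$-avoiding connected (for a color $c$) if there is a $u$-$v$ path and either at least one of $u,v$ has color $c$ or some $u$-$v$ path contains no vertex of color $c$. The graph is vertex-color-avoiding connected if any two vertices are vertex-$c$-avoiding connected for every color $c$. *)

theory Defs
  imports Main
begin

definition simple_graph :: "'a set \<Rightarrow> 'a set set \<Rightarrow> bool" where
  "simple_graph V E \<longleftrightarrow> finite V \<and>
     (\<forall>e\<in>E. \<exists>u v. e = {u, v} \<and> u \<noteq> v \<and> u \<in> V \<and> v \<in> V)"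

definition conn_in :: "'a set set \<Rightarrow> 'a set \<Rightarrow> 'a \<Rightarrow> 'a \<Rightarrow> bool" where
  "conn_in E S u v \<longleftrightarrow> u \<in> S \<and> v \<in> S \<and>
     (u, v) \<in> {(x, y). {x, y} \<in> E \<and> x \<in> S \<and> y \<in> S}\<^sup>*"

definition vc_avoiding_connected ::
  "'a set \<Rightarrow> 'a set set \<Rightarrow> ('a \<Rightarrow> 'c) \<Rightarrow> 'c \<Rightarrow> 'a \<Rightarrow> 'a \<Rightarrow> bool" where
  "vc_avoiding_connected V E col c u v \<longleftrightarrow> conn_in E V u v \<and>
     (col u = c \<or> col v = c \<or> conn_in E {x \<in> V. col x \<noteq> c} u v)"

definition vertex_color_avoiding_connected ::
  "'a set \<Rightarrow> 'a set set \<Rightarrow> ('a \<Rightarrow> 'c) \<Rightarrow> bool" where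
  "vertex_color_avoiding_connected V E col \<longleftrightarrow>
     (\<forall>c. \<forall>u\<in>V. \<forall>v\<in>V. vc_avoiding_connected V E col c u v)"

end

theory Submission
  imports Defs
begin


lemma sg_fin: assumes "simple_graph V E" shows "finite V" "finite E"
proof -
  show fV: "finite V" using assms unfolding simple_graph_def by auto
  have "E \<subseteq> Pow V" using assms unfolding simple_graph_def by auto
  then show "finite E" using fV by (meson finite_Pow_iff finite_subset)
qed

lemma handshake:
  assumes "simple_graph V E"
  shows "(\<Sum>v\<in>V. card {e\<in>E. v\<in>e}) = 2 * card E"
proof -
  have fV: "finite V" and fE: "finite E" using sg_fin[OF assms] by auto
  have "(\<Sum>v\<in>V. card {e\<in>E. v\<in>e}) = (\<Sum>v\<in>V. \<Sum>e\<in>E. if v\<in>e then 1 else 0)"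
    using fE by (simp add: sum.If_cases Int_def)
  also have "\<dots> = (\<Sum>e\<in>E. \<Sum>v\<in>V. if v\<in>e then 1 else 0)" by (rule sum.swap)
  also have "\<dots> = (\<Sum>e\<in>E. 2)"
  proof (rule sum.cong)
    fix e assume "e \<in> E"
    then obtain a b where ab: "e = {a,b}" "a \<noteq> b" "a \<in> V" "b \<in> V"
      using assms unfolding simple_graph_def by blast
    have "(\<Sum>v\<in>V. if v\<in>e then 1 else 0) = card (V \<inter> e)"
      using fV by (simp add: sum.If_cases)
    also have "V \<inter> e = {a,b}" using ab by auto
    finally show "(\<Sum>v\<in>V. if v\<in>e then 1 else 0) = (2::nat)" using ab by simp
  qed simp
  finally show ?thesis by simp
qed

lemma first_step:
  assumes "conn_in E S u v" "u \<noteq> v"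
  shows "\<exists>z. {u,z} \<in> E \<and> z \<in> S"
  using assms unfolding conn_in_def
  by (auto elim: converse_rtranclE)

lemma leaf_exists:
  assumes sg: "simple_graph V E" and con: "\<forall>u\<in>V. \<forall>v\<in>V. conn_in E V u v"
    and c2: "2 \<le> card V" and ce: "card E < card V"
  shows "\<exists>l\<in>V. \<exists>w. {l,w} \<in> E \<and> l \<noteq> w \<and> (\<forall>e\<in>E. l\<in>e \<longrightarrow> e = {l,w})"
proof -
  have fV: "finite V" and fE: "finite E" using sg_fin[OF sg] by auto
  have "\<exists>v\<in>V. card {e\<in>E. v\<in>e} \<le> 1"
  proof (rule ccontr)
    assume "\<not> ?thesis"
    then have "\<forall>v\<in>V. 2 \<le> card {e\<in>E. v\<in>e}" by auto
    then have "(\<Sum>v\<in>V. (2::nat)) \<le> (\<Sum>v\<in>V. card {e\<in>E. v\<in>e})"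
      by (intro sum_mono) auto
    then show False using handshake[OF sg] ce by simp
  qed
  then obtain l where l: "l \<in> V" "card {e\<in>E. l\<in>e} \<le> 1" by blast
  obtain u where u: "u \<in> V" "u \<noteq> l"
  proof -
    have "\<not> V \<subseteq> {l}"
    proof
      assume "V \<subseteq> {l}"
      then have "card V \<le> 1" using card_mono[of "{l}" V] by simp
      with c2 show False by simp
    qed
    then show ?thesis using that by auto
  qed
  obtain w where w: "{l,w} \<in> E" "w \<in> V" using first_step[OF con[rule_format, OF l(1) u(1)]] u by auto
  have lw: "l \<noteq> w"
  proof
    assume "l = w"
    have "\<exists>a b. {l,w} = {a,b} \<and> a \<noteq> b" using w(1) sg unfolding simple_graph_def by blast
    then obtain a b where "{l} = {a,b}" "a \<noteq> b" using \<open>l = w\<close> by auto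
    then show False by simp
  qed
  have A: "{l,w} \<in> {e\<in>E. l\<in>e}" using w by simp
  have fin: "finite {e\<in>E. l\<in>e}" using fE by simp
  have B: "\<forall>a\<in>{e\<in>E. l\<in>e}. \<forall>b\<in>{e\<in>E. l\<in>e}. a = b"
    using l(2) card_le_Suc0_iff_eq[OF fin] by simp
  have C: "e = {l,w}" if "e \<in> E" "l \<in> e" for e
  proof -
    have "e \<in> {e\<in>E. l\<in>e}" using that by simp
    then show ?thesis using B[rule_format, OF _ A] by simp
  qed
  show ?thesis using l(1) lw w(1) C by blast
qed

lemma remove_conn:
  assumes lw: "{l,w} \<in> E" "l \<noteq> w" "\<forall>e\<in>E. l\<in>e \<longrightarrow> e = {l,w}"
    and c: "conn_in E S u v" and ul: "u \<noteq> l" and vl: "v \<noteq> l"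
  shows "conn_in (E - {{l,w}}) (S - {l}) u v"
proof -
  define R where "R = {(x, y). {x, y} \<in> E \<and> x \<in> S \<and> y \<in> S}"
  define R' where "R' = {(x, y). {x, y} \<in> E - {{l,w}} \<and> x \<in> S - {l} \<and> y \<in> S - {l}}"
  define f where "f x = (if x = l then w else x)" for x
  have uS: "u \<in> S" and vS: "v \<in> S" and uv: "(u,v) \<in> R\<^sup>*" using c unfolding conn_in_def R_def by auto
  have "(u, f y) \<in> R'\<^sup>* \<and> f y \<in> S - {l}" if "(u,y) \<in> R\<^sup>*" for y
    using that
  proof (induction rule: rtrancl_induct)
    case base
    then show ?case using uS ul by (simp add: f_def)
  next
    case (step y z)
    have IH: "(u, f y) \<in> R'\<^sup>*" "f y \<in> S - {l}" using step(3) by auto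
    have e: "{y,z} \<in> E" "y \<in> S" "z \<in> S" using step(2) unfolding R_def by auto
    show ?case
    proof (cases "z = l")
      case True
      then have "{y,l} \<in> E" using e(1) by simp
      then have "{y,l} = {l,w}" by (rule lw(3)[rule_format]) simp
      then have "y = w" using lw(2) by (auto simp: doubleton_eq_iff)
      then have "f z = f y" using True lw(2) by (simp add: f_def)
      then show ?thesis using IH by simp
    next
      case zl: False
      show ?thesis
      proof (cases "y = l")
        case True
        then have "{l,z} \<in> E" using e(1) by simp
        then have "{l,z} = {l,w}" by (rule lw(3)[rule_format]) simp
        then have "z = w" using zl by (simp add: doubleton_eq_iff)
        then have "f z = f y" "f z \<in> S - {l}" using True zl e(3) by (simp_all add: f_def)
        then show ?thesis using IH by simp
      next
        case False
        then have "{y,z} \<noteq> {l,w}" using zl by (auto simp: doubleton_eq_iff)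
        then have "(y,z) \<in> R'" using e False zl unfolding R'_def by simp
        moreover have "f y = y" "f z = z" using False zl by (simp_all add: f_def)
        ultimately show ?thesis using IH e(3) zl
          by (metis DiffI rtrancl_into_rtrancl singletonD)
      qed
    qed
  qed
  from this[OF uv] have "(u, f v) \<in> R'\<^sup>*" by simp
  then have "(u, v) \<in> R'\<^sup>*" using vl by (simp add: f_def)
  then show ?thesis unfolding conn_in_def R'_def using uS vS ul vl by auto
qed


lemma remove_leaf:
  assumes sg: "simple_graph V E" and l: "l \<in> V" and lw: "{l,w} \<in> E" "l \<noteq> w"
    "\<forall>e\<in>E. l\<in>e \<longrightarrow> e = {l,w}"
  shows "simple_graph (V - {l}) (E - {{l,w}})" "card (V - {l}) = card V - 1"
    "card (E - {{l,w}}) = card E - 1" "w \<in> V - {l}" "1 \<le> card E"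
proof -
  have fV: "finite V" and fE: "finite E" using sg_fin[OF sg] by auto
  show "card (V - {l}) = card V - 1" using l fV by simp
  show "card (E - {{l,w}}) = card E - 1" using lw(1) fE by simp
  have "E \<noteq> {}" using lw(1) by blast
  then have "0 < card E" using fE card_gt_0_iff by blast
  then show "1 \<le> card E" by simp
  have "\<exists>a b. {l,w} = {a,b} \<and> a \<noteq> b \<and> a \<in> V \<and> b \<in> V" using lw(1) sg unfolding simple_graph_def by blast
  then obtain a b where ab: "{l,w} = {a,b}" "a \<in> V" "b \<in> V" by blast
  have "w \<in> {a,b}" using ab(1) by (metis insertCI)
  then have "w \<in> V" using ab(2,3) by blast
  then show "w \<in> V - {l}" using lw(2) by simp
  show "simple_graph (V - {l}) (E - {{l,w}})"
    unfolding simple_graph_def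
  proof (intro conjI ballI)
    show "finite (V - {l})" using fV by simp
    fix e assume e: "e \<in> E - {{l,w}}"
    then have "\<exists>a b. e = {a,b} \<and> a \<noteq> b \<and> a \<in> V \<and> b \<in> V" using sg unfolding simple_graph_def by blast
    then obtain a b where ab: "e = {a,b}" "a \<noteq> b" "a \<in> V" "b \<in> V" by blast
    have "l \<notin> e" using e lw(3) by blast
    then show "\<exists>u v. e = {u, v} \<and> u \<noteq> v \<and> u \<in> V - {l} \<and> v \<in> V - {l}"
      using ab by blast
  qed
qed

lemma conn_bound:
  "\<forall>V E. card V = n \<longrightarrow> simple_graph V E \<longrightarrow> (\<forall>u\<in>V. \<forall>v\<in>V. conn_in E V u v)
     \<longrightarrow> card V - 1 \<le> card E"
proof (induction n)
  case 0
  then show ?case by simp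
next
  case (Suc n)
  show ?case
  proof (intro allI impI)
    fix V :: "'a set" and E
    assume cV: "card V = Suc n" and sg: "simple_graph V E" and con: "\<forall>u\<in>V. \<forall>v\<in>V. conn_in E V u v"
    show "card V - 1 \<le> card E"
    proof (rule ccontr)
      assume ne: "\<not> card V - 1 \<le> card E"
      then have c2: "2 \<le> card V" and ce: "card E < card V" by auto
      obtain l w where l: "l \<in> V" and lw: "{l,w} \<in> E" "l \<noteq> w" "\<forall>e\<in>E. l\<in>e \<longrightarrow> e = {l,w}"
        using leaf_exists[OF sg con c2 ce] by blast
      note R = remove_leaf[OF sg l lw]
      have con': "\<forall>u\<in>V - {l}. \<forall>v\<in>V - {l}. conn_in (E - {{l,w}}) (V - {l}) u v"
        using remove_conn[OF lw] con by blast
      have "card (V - {l}) - 1 \<le> card (E - {{l,w}})"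
        using Suc.IH R(1,2) con' cV by simp
      then show False using R(2,3,5) ne by linarith
    qed
  qed
qed

lemma vca_conn:
  assumes "vertex_color_avoiding_connected V E col"
  shows "\<forall>u\<in>V. \<forall>v\<in>V. conn_in E V u v"
  using assms unfolding vertex_color_avoiding_connected_def vc_avoiding_connected_def by blast

lemma vca_remove:
  assumes vca: "vertex_color_avoiding_connected V E col"
    and lw: "{l,w} \<in> E" "l \<noteq> w" "\<forall>e\<in>E. l\<in>e \<longrightarrow> e = {l,w}"
  shows "vertex_color_avoiding_connected (V - {l}) (E - {{l,w}}) col"
  unfolding vertex_color_avoiding_connected_def vc_avoiding_connected_def
proof (intro allI ballI conjI)
  fix c u v assume u: "u \<in> V - {l}" and v: "v \<in> V - {l}"
  have h: "conn_in E V u v \<and> (col u = c \<or> col v = c \<or> conn_in E {x\<in>V. col x \<noteq> c} u v)"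
    using vca u v unfolding vertex_color_avoiding_connected_def vc_avoiding_connected_def by blast
  show "conn_in (E - {{l,w}}) (V - {l}) u v" using remove_conn[OF lw] h u v by blast
  have eq: "{x\<in>V. col x \<noteq> c} - {l} = {x \<in> V - {l}. col x \<noteq> c}" by blast
  show "col u = c \<or> col v = c \<or> conn_in (E - {{l,w}}) {x \<in> V - {l}. col x \<noteq> c} u v"
    using remove_conn[OF lw, of "{x\<in>V. col x \<noteq> c}" u v] h u v unfolding eq by blast
qed

lemma color_bound:
  "\<forall>V E. card V = n \<longrightarrow> simple_graph V E \<longrightarrow> vertex_color_avoiding_connected V E col
     \<longrightarrow> card E < card V \<longrightarrow> card (col ` V) \<le> 2"
proof (induction n)
  case 0
  then show ?case by (metis card_image_le le0 le_zero_eq sg_fin(1))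
next
  case (Suc n)
  show ?case
  proof (intro allI impI)
    fix V :: "'a set" and E
    assume cV: "card V = Suc n" and sg: "simple_graph V E" and vca: "vertex_color_avoiding_connected V E col"
      and ce: "card E < card V"
    have fV: "finite V" using sg_fin[OF sg] by auto
    show "card (col ` V) \<le> 2"
    proof (cases "card V \<le> 2")
      case True
      then show ?thesis using card_image_le[OF fV, of col] by linarith
    next
      case False
      then have c2: "2 \<le> card V" by simp
      obtain l w where l: "l \<in> V" and lw: "{l,w} \<in> E" "l \<noteq> w" "\<forall>e\<in>E. l\<in>e \<longrightarrow> e = {l,w}"
        using leaf_exists[OF sg vca_conn[OF vca] c2 ce] by blast
      note R = remove_leaf[OF sg l lw]
      have IH: "card (col ` (V - {l})) \<le> 2"
        using Suc.IH R(1,2,3,5) vca_remove[OF vca lw] cV ce by simp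
      have ins: "col ` V = insert (col l) (col ` (V - {l}))" using l by blast
      show ?thesis
      proof (cases "col l \<in> col ` (V - {l})")
        case True
        then show ?thesis using ins IH by (simp add: insert_absorb)
      next
        case nin: False
        show ?thesis
        proof (rule ccontr)
          assume "\<not> card (col ` V) \<le> 2"
          then have "2 \<le> card (col ` (V - {l}))" using ins nin fV by simp
          then obtain y where y: "y \<in> V - {l}" "col y \<noteq> col w"
          proof -
            assume th: "\<And>y. y \<in> V - {l} \<Longrightarrow> col y \<noteq> col w \<Longrightarrow> thesis"
            assume c: "2 \<le> card (col ` (V - {l}))"
            show thesis
            proof (rule ccontr)
              assume "\<not> thesis"
              then have "col ` (V - {l}) \<subseteq> {col w}" using th by blast
              then have "card (col ` (V - {l})) \<le> 1" using card_mono[of "{col w}"] by fastforce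
              then show False using c by simp
            qed
          qed
          have clw: "col l \<noteq> col w" using nin R(4) by blast
          have "vc_avoiding_connected V E col (col w) l y"
            using vca l y unfolding vertex_color_avoiding_connected_def by blast
          then have "col l = col w \<or> col y = col w \<or> conn_in E {x\<in>V. col x \<noteq> col w} l y"
            unfolding vc_avoiding_connected_def by (rule conjunct2)
          then have cc: "conn_in E {x\<in>V. col x \<noteq> col w} l y" using clw y(2) by simp
          have lyne: "l \<noteq> y" using y(1) by auto
          obtain z where z: "{l,z} \<in> E" "z \<in> {x\<in>V. col x \<noteq> col w}"
            using first_step[OF cc lyne] by (elim exE conjE)
          have "{l,z} = {l,w}" using z(1) by (rule lw(3)[rule_format]) simp
          then have "z = w \<or> (l = w \<and> z = l)" by (simp add: doubleton_eq_iff)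
          then have "z = w" using lw(2) by blast
          then show False using z(2) by simp
        qed
      qed
    qed
  qed
qed

lemma part1:
  "\<forall>(V :: 'a set) (E :: 'a set set) (col :: 'a \<Rightarrow> 'c) (n :: nat) (k :: nat).
            simple_graph V E \<and> card V = n \<and> card (col ` V) = k \<and> 0 < k \<and>
            vertex_color_avoiding_connected V E col \<longrightarrow>
            (k \<le> 2 \<longrightarrow> n - 1 \<le> card E) \<and> (3 \<le> k \<longrightarrow> n \<le> card E)"
proof (intro allI impI conjI)
  fix V :: "'a set" and E col n k
  assume a: "simple_graph V E \<and> card V = n \<and> card (col ` V) = k \<and> 0 < k \<and>
            vertex_color_avoiding_connected V E col"
  show "n - 1 \<le> card E" using conn_bound a vca_conn by blast
  show "n \<le> card E" if "3 \<le> k"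
  proof (rule ccontr)
    assume "\<not> n \<le> card E"
    then have "card (col ` V) \<le> 2" using color_bound a by (metis not_le)
    then show False using a that by simp
  qed
qed



lemma conn_refl: "u \<in> S \<Longrightarrow> conn_in E S u u"
  unfolding conn_in_def by simp

lemma conn_sym:
  assumes "conn_in E S u v" shows "conn_in E S v u"
proof -
  define R where "R = {(x, y). {x, y} \<in> E \<and> x \<in> S \<and> y \<in> S}"
  have "R\<inverse> = R" unfolding R_def by (auto simp: insert_commute)
  moreover have "(u,v) \<in> R\<^sup>*" using assms unfolding conn_in_def R_def by simp
  ultimately have "(v,u) \<in> R\<^sup>*" by (metis rtrancl_converseI)
  then show ?thesis using assms unfolding conn_in_def R_def by simp
qed

lemma conn_trans:
  assumes "conn_in E S u v" "conn_in E S v w" shows "conn_in E S u w"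
  using assms unfolding conn_in_def by (meson rtrancl_trans)

lemma conn_edge:
  assumes "{u,v} \<in> E" "u \<in> S" "v \<in> S" shows "conn_in E S u v"
  using assms unfolding conn_in_def by (simp add: r_into_rtrancl)

lemma seg:
  assumes ed: "\<forall>i. a \<le> i \<and> i < b \<longrightarrow> {i, Suc i} \<in> E" and sub: "{a..b} \<subseteq> S"
    and "a \<le> i" "i \<le> j" "j \<le> b"
  shows "conn_in E S i j"
  using assms(4,5)
proof (induction j)
  case 0
  then have "i = 0" using assms(3) by simp
  then show ?case using sub assms(3) conn_refl[of 0 S E] by auto
next
  case (Suc j)
  show ?case
  proof (cases "i = Suc j")
    case True
    have "i \<in> S" using Suc.prems sub assms(3) by auto
    then show ?thesis using True conn_refl by metis
  next
    case False
    then have ij: "i \<le> j" using Suc.prems by simp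
    have c1: "conn_in E S i j" using Suc.IH ij Suc.prems by simp
    have "{j, Suc j} \<in> E" using ed ij assms(3) Suc.prems by simp
    moreover have "j \<in> S" "Suc j \<in> S" using sub ij assms(3) Suc.prems by auto
    ultimately have "conn_in E S j (Suc j)" by (rule conn_edge)
    then show ?thesis by (rule conn_trans[OF c1])
  qed
qed

lemma seg2:
  assumes ed: "\<forall>i. a \<le> i \<and> i < b \<longrightarrow> {i, Suc i} \<in> E" and sub: "{a..b} \<subseteq> S"
    and "i \<in> {a..b}" "j \<in> {a..b}"
  shows "conn_in E S i j"
proof (cases "i \<le> j")
  case True
  then show ?thesis using seg[OF ed sub] assms(3,4) by auto
next
  case False
  then have "conn_in E S j i" using seg[OF ed sub] assms(3,4) by auto
  then show ?thesis by (rule conn_sym)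
qed

definition pathE :: "nat \<Rightarrow> nat set set" where
  "pathE n = (\<lambda>i. {i, Suc i}) ` {0..<n-1}"

lemma card_pathE: "card (pathE n) = n - 1"
proof -
  have "inj_on (\<lambda>i. {i, Suc i}) {0..<n-1}"
    by (auto simp: inj_on_def doubleton_eq_iff)
  then show ?thesis unfolding pathE_def by (simp add: card_image)
qed

lemma path_edge: "Suc i < n \<Longrightarrow> {i, Suc i} \<in> pathE n"
  unfolding pathE_def by force

lemma sg_path: "simple_graph {0..<n} (pathE n)"
  unfolding simple_graph_def pathE_def by force

lemma path_conn:
  assumes "a \<le> b" "b < n" "{a..b} \<subseteq> S" "i \<in> {a..b}" "j \<in> {a..b}" "pathE n \<subseteq> E"
  shows "conn_in E S i j"
proof (rule seg2[OF _ assms(3,4,5)])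
  show "\<forall>i. a \<le> i \<and> i < b \<longrightarrow> {i, Suc i} \<in> E" using path_edge assms(2,6) by auto
qed

lemma part2a:
  assumes "1 \<le> k" "k \<le> 2" "k \<le> n"
  shows "\<exists>(V :: nat set) (E :: nat set set) (col :: nat \<Rightarrow> nat).
               simple_graph V E \<and> card V = n \<and> card (col ` V) = k \<and>
               vertex_color_avoiding_connected V E col \<and>
               card E = (if k \<le> 2 then n - 1 else n)"
proof (intro exI conjI)
  define col where "col x = (if k = 2 \<and> x = n - 1 then 1 else (0::nat))" for x
  show "simple_graph {0..<n} (pathE n)" by (rule sg_path)
  show "card {0..<n} = n" by simp
  show "card (pathE n) = (if k \<le> 2 then n - 1 else n)" using assms card_pathE by simp
  show "card (col ` {0..<n}) = k"
  proof (cases "k = 2")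
    case True
    have "col ` {0..<n} = {0,1}"
    proof
      show "col ` {0..<n} \<subseteq> {0,1}" unfolding col_def by auto
      have "col 0 = 0" "col (n-1) = 1" using True assms unfolding col_def by auto
      moreover have "0 \<in> {0..<n}" "n - 1 \<in> {0..<n}" using assms by auto
      ultimately show "{0,1} \<subseteq> col ` {0..<n}" by (metis empty_subsetI image_eqI insert_subset)
    qed
    then show ?thesis using True by simp
  next
    case False
    then have "k = 1" using assms by simp
    have "col = (\<lambda>x. 0)" using False by (simp add: col_def fun_eq_iff)
    moreover have "(0::nat) \<in> {0..<n}" using assms by simp
    ultimately have "col ` {0..<n} = {0}" by (simp add: image_constant)
    then show ?thesis using \<open>k = 1\<close> by simp
  qed
  show "vertex_color_avoiding_connected {0..<n} (pathE n) col"
    unfolding vertex_color_avoiding_connected_def vc_avoiding_connected_def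
  proof (intro allI ballI conjI)
    fix c u v assume u: "u \<in> {0..<n}" and v: "v \<in> {0..<n}"
    have "{0..n-1} \<subseteq> {0..<n}" using u by auto
    then show cV: "conn_in (pathE n) {0..<n} u v"
      using path_conn[of 0 "n-1" n "{0..<n}" u v "pathE n"] u v by auto
    show "col u = c \<or> col v = c \<or> conn_in (pathE n) {x \<in> {0..<n}. col x \<noteq> c} u v"
    proof (cases "col u = c \<or> col v = c")
      case True then show ?thesis by blast
    next
      case nc: False
      have "conn_in (pathE n) {x \<in> {0..<n}. col x \<noteq> c} u v"
      proof (cases "c = 0")
        case True
        then have "u = n - 1" "v = n - 1" using nc unfolding col_def by (auto split: if_splits)
        then have "u = v" "u \<in> {x \<in> {0..<n}. col x \<noteq> c}" using u nc by auto
        then show ?thesis using conn_refl by metis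
      next
        case c0: False
        show ?thesis
        proof (cases "k = 2 \<and> c = 1")
          case True
          then have "u \<noteq> n - 1" "v \<noteq> n - 1" using nc unfolding col_def by auto
          then have uv: "u \<in> {0..n-2}" "v \<in> {0..n-2}" using u v by auto
          have sub: "{0..n-2} \<subseteq> {x \<in> {0..<n}. col x \<noteq> c}" using True assms unfolding col_def by auto
          have "n - 2 < n" using u by auto
          then show ?thesis using path_conn[OF le0 _ sub uv subset_refl] by blast
        next
          case False
          then have "{x \<in> {0..<n}. col x \<noteq> c} = {0..<n}" using c0 unfolding col_def by auto
          then show ?thesis using cV by simp
        qed
      qed
      then show ?thesis by blast
    qed
  qed
qed


lemma part2b:
  assumes k3: "3 \<le> k" and kn: "k \<le> n"
  shows "\<exists>(V :: nat set) (E :: nat set set) (col :: nat \<Rightarrow> nat).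
               simple_graph V E \<and> card V = n \<and> card (col ` V) = k \<and>
               vertex_color_avoiding_connected V E col \<and>
               card E = (if k \<le> 2 then n - 1 else n)"
proof (intro exI conjI)
  define col where "col x = (if x < k then x else (0::nat))" for x
  define E where "E = insert {0, n-1} (pathE n)"
  have pE: "pathE n \<subseteq> E" unfolding E_def by blast
  have e0: "{0, n-1} \<in> E" unfolding E_def by blast
  show "card {0..<n} = n" by simp
  have nin: "{0, n-1} \<notin> pathE n"
  proof
    assume "{0, n-1} \<in> pathE n"
    then obtain i where "i < n - 1" "{0, n-1} = {i, Suc i}" unfolding pathE_def by auto
    then show False using k3 kn by (auto simp: doubleton_eq_iff)
  qed
  have "finite (pathE n)" unfolding pathE_def by simp
  then have "card E = Suc (n - 1)" unfolding E_def using nin card_pathE by simp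
  then show "card E = (if k \<le> 2 then n - 1 else n)" using k3 kn by simp
  show "simple_graph {0..<n} E"
    unfolding simple_graph_def
  proof (intro conjI ballI)
    show "finite {0..<n}" by simp
    fix e assume "e \<in> E"
    then consider "e = {0, n-1}" | "e \<in> pathE n" unfolding E_def by blast
    then show "\<exists>u v. e = {u, v} \<and> u \<noteq> v \<and> u \<in> {0..<n} \<and> v \<in> {0..<n}"
    proof cases
      case 1
      have "0 \<noteq> n - 1" "0 \<in> {0..<n}" "n - 1 \<in> {0..<n}" using k3 kn by auto
      then show ?thesis using 1 by blast
    next
      case 2
      then show ?thesis using sg_path[of n] unfolding simple_graph_def by blast
    qed
  qed
  have "col ` {0..<n} = {0..<k}"
  proof
    show "col ` {0..<n} \<subseteq> {0..<k}" using k3 unfolding col_def by auto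
    show "{0..<k} \<subseteq> col ` {0..<n}"
    proof
      fix j assume "j \<in> {0..<k}"
      then have "j \<in> {0..<n}" "col j = j" using kn unfolding col_def by auto
      then show "j \<in> col ` {0..<n}" by (metis image_eqI)
    qed
  qed
  then show "card (col ` {0..<n}) = k" by simp
  show "vertex_color_avoiding_connected {0..<n} E col"
    unfolding vertex_color_avoiding_connected_def vc_avoiding_connected_def
  proof (intro allI ballI conjI)
    fix c u v assume u: "u \<in> {0..<n}" and v: "v \<in> {0..<n}"
    have sub0: "{0..n-1} \<subseteq> {0..<n}" using u by auto
    show cV: "conn_in E {0..<n} u v"
      using path_conn[OF le0 _ sub0 _ _ pE] u v by auto
    show "col u = c \<or> col v = c \<or> conn_in E {x \<in> {0..<n}. col x \<noteq> c} u v"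
    proof (cases "col u = c \<or> col v = c")
      case True then show ?thesis by blast
    next
      case nc: False
      define S where "S = {x \<in> {0..<n}. col x \<noteq> c}"
      have "conn_in E S u v"
      proof (cases "c = 0")
        case True
        have uv: "u \<in> {1..k-1}" "v \<in> {1..k-1}" using nc True unfolding col_def
          by (auto split: if_splits)
        have sub: "{1..k-1} \<subseteq> S" unfolding S_def col_def using True kn by auto
        have "1 \<le> k - 1" "k - 1 < n" using k3 kn by auto
        then show ?thesis using path_conn[OF _ _ sub uv pE] by blast
      next
        case c0: False
        show ?thesis
        proof (cases "c < k")
          case ck: True
          have inS: "x \<in> S" if "x \<in> {0..<n}" "x \<noteq> c" for x
            using that c0 unfolding S_def col_def by auto
          have uc: "u \<noteq> c" "v \<noteq> c" using nc ck unfolding col_def by auto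
          have subL: "{0..c-1} \<subseteq> S" using inS c0 ck kn by auto
          have subH: "{c+1..n-1} \<subseteq> S" using inS by auto
          have cross: "conn_in E S x y" if xy: "x \<in> {0..<n}" "y \<in> {0..<n}" "x < c" "c < y" for x y
          proof -
            have c1: "conn_in E S x 0"
              using path_conn[OF le0 _ subL _ _ pE] xy ck kn by auto
            have "0 \<in> S" "n - 1 \<in> S" using inS c0 xy by auto
            then have c2: "conn_in E S 0 (n-1)" using conn_edge[OF e0] by blast
            have c3: "conn_in E S (n-1) y"
              using path_conn[OF _ _ subH _ _ pE] xy by auto
            show ?thesis by (rule conn_trans[OF conn_trans[OF c1 c2] c3])
          qed
          show ?thesis
          proof (cases "u < c")
            case uL: True
            show ?thesis
            proof (cases "v < c")
              case True
              then show ?thesis using path_conn[OF le0 _ subL _ _ pE] u uL ck kn by auto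
            next
              case False
              then have "c < v" using uc by simp
              then show ?thesis using cross u v uL by blast
            qed
          next
            case uH: False
            then have uH: "c < u" using uc by simp
            show ?thesis
            proof (cases "v < c")
              case True
              then have "conn_in E S v u" using cross u v uH by blast
              then show ?thesis by (rule conn_sym)
            next
              case False
              then have "c < v" using uc by simp
              then show ?thesis using path_conn[OF _ _ subH _ _ pE] u v uH by auto
            qed
          qed
        next
          case False
          then have "S = {0..<n}" unfolding S_def col_def using c0 by auto
          then show ?thesis using cV by simp
        qed
      qed
      then show ?thesis unfolding S_def by blast
    qed
  qed
qed

lemma part2:
  "\<forall>(n :: nat) (k :: nat). 1 \<le> k \<and> k \<le> n \<longrightarrow>
            (\<exists>(V :: nat set) (E :: nat set set) (col :: nat \<Rightarrow> nat).
               simple_graph V E \<and> card V = n \<and> card (col ` V) = k \<and>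
               vertex_color_avoiding_connected V E col \<and>
               card E = (if k \<le> 2 then n - 1 else n))"
proof (intro allI impI)
  fix n k :: nat assume a: "1 \<le> k \<and> k \<le> n"
  show "\<exists>(V :: nat set) (E :: nat set set) (col :: nat \<Rightarrow> nat).
               simple_graph V E \<and> card V = n \<and> card (col ` V) = k \<and>
               vertex_color_avoiding_connected V E col \<and>
               card E = (if k \<le> 2 then n - 1 else n)"
  proof (cases "k \<le> 2")
    case True then show ?thesis using part2a a by blast
  next
    case False then show ?thesis using part2b a by simp
  qed
qed


theorem theorem3p11:
  shows "(\<forall>(V :: 'a set) (E :: 'a set set) (col :: 'a \<Rightarrow> 'c) (n :: nat) (k :: nat).
            simple_graph V E \<and> card V = n \<and> card (col ` V) = k \<and> 0 < k \<and>
            vertex_color_avoiding_connected V E col \<longrightarrow>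
            (k \<le> 2 \<longrightarrow> n - 1 \<le> card E) \<and> (3 \<le> k \<longrightarrow> n \<le> card E))
       \<and> (\<forall>(n :: nat) (k :: nat). 1 \<le> k \<and> k \<le> n \<longrightarrow>
            (\<exists>(V :: nat set) (E :: nat set set) (col :: nat \<Rightarrow> nat).
               simple_graph V E \<and> card V = n \<and> card (col ` V) = k \<and>
               vertex_color_avoiding_connected V E col \<and>
               card E = (if k \<le> 2 then n - 1 else n)))"
    using part1 part2 by blast

end
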